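(* Let $d\ge2$ and let $\ell=\overline{xy}$ be a critical leaf of a sibling $\sigma_d$-invariant lamination $\mathcal L$ such that $x$ is periodic under $\sigma_d$. Then $\ell$ is isolated in $\mathcal L$ (it is not a Hausdorff limit of other leaves of $\mathcal L$).
   Context: $\mathbb S$ is the unit circle, $\sigma_d(z)=z^d$. A chord $\overline{ab}$ joins $a,b\in\mathbb S$; distinct chords cross if they meet in the open unit disk; a chord is critical if $a\ne b$ and $\sigma_d(a)=\sigma_d(b)$. A lamination is a family of pairwise non-crossing chords (leaves) containing all points of $\mathbb S$, whose union is closed. It is sibling $\sigma_d$-invariant if (1) images of leaves are leaves; (2) every leaf is the image of some leaf; (3) for every non-critical leaf $\ell$ there exist $d$ pairwise disjoint leaves $\ell_1=\ell,\dots,\ell_d$ with equal $\sigma_d$-images. *)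

theory Defs
  imports "HOL-Analysis.Analysis"
begin

abbreviation circle :: "complex set" where "circle \<equiv> sphere 0 1"

definition sigma :: "nat \<Rightarrow> complex \<Rightarrow> complex" where
  "sigma d z = z ^ d"

text \<open>A chord is represented by its set of endpoints {a,b} (a = b allowed:
  degenerate chord = point of the circle). Geometrically it is the convex hull
  of its endpoints, i.e. the closed segment.\<close>
definition is_chord :: "complex set \<Rightarrow> bool" where
  "is_chord l \<longleftrightarrow> (\<exists>a b. a \<in> circle \<and> b \<in> circle \<and> l = {a, b})"

definition chord_seg :: "complex set \<Rightarrow> complex set" where
  "chord_seg l = convex hull l"

definition crossing :: "complex set \<Rightarrow> complex set \<Rightarrow> bool" where
  "crossing l m \<longleftrightarrow> l \<noteq> m \<and> chord_seg l \<inter> chord_seg m \<inter> ball 0 1 \<noteq> {}"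

definition critical :: "nat \<Rightarrow> complex set \<Rightarrow> bool" where
  "critical d l \<longleftrightarrow> (\<exists>a b. l = {a, b} \<and> a \<noteq> b \<and> sigma d a = sigma d b)"

definition lamination :: "complex set set \<Rightarrow> bool" where
  "lamination L \<longleftrightarrow>
     (\<forall>l\<in>L. is_chord l) \<and>
     (\<forall>l\<in>L. \<forall>m\<in>L. \<not> crossing l m) \<and>
     (\<forall>a\<in>circle. {a} \<in> L) \<and>
     closed (\<Union>l\<in>L. chord_seg l)"

definition sibling_invariant :: "nat \<Rightarrow> complex set set \<Rightarrow> bool" where
  "sibling_invariant d L \<longleftrightarrow>
     lamination L \<and>
     (\<forall>l\<in>L. sigma d ` l \<in> L) \<and>
     (\<forall>l\<in>L. \<exists>m\<in>L. sigma d ` m = l) \<and>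
     (\<forall>l\<in>L. \<not> critical d l \<longrightarrow>
        (\<exists>s :: nat \<Rightarrow> complex set. s 0 = l \<and>
            (\<forall>i<d. s i \<in> L \<and> sigma d ` (s i) = sigma d ` l) \<and>
            (\<forall>i<d. \<forall>j<d. i \<noteq> j \<longrightarrow> chord_seg (s i) \<inter> chord_seg (s j) = {})))"

definition hausdorff_dist :: "complex set \<Rightarrow> complex set \<Rightarrow> real" where
  "hausdorff_dist A B = max (SUP a\<in>A. infdist a B) (SUP b\<in>B. infdist b A)"

definition periodic_pt :: "nat \<Rightarrow> complex \<Rightarrow> bool" where
  "periodic_pt d x \<longleftrightarrow> (\<exists>n>0. (sigma d ^^ n) x = x)"

definition isolated_leaf :: "complex set set \<Rightarrow> complex set \<Rightarrow> bool" where
  "isolated_leaf L l \<longleftrightarrow>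
     \<not> (\<exists>s :: nat \<Rightarrow> complex set. (\<forall>n. s n \<in> L - {l}) \<and>
            (\<lambda>n. hausdorff_dist (chord_seg (s n)) (chord_seg l)) \<longlonglongrightarrow> 0)"

end

theory Submission
  imports Defs "HOL-Library.Real_Mod"
begin


lemma trig_id:
  "Im ((cis r - cis p) * cnj (cis q - cis p)) = 4 * sin ((r-q)/2) * sin ((q-p)/2) * sin ((r-p)/2)"
proof -
  define u where "u = (r-q)/2"
  define v where "v = (q-p)/2"
  have hr: "r = p + 2*u + 2* v" and hq: "q = p + 2* v" and hrp: "(r-p)/2 = u + v" by (auto simp: u_def v_def field_simps)
  have "Im ((cis r - cis p) * cnj (cis q - cis p)) = sin (r - q) - sin (r - p) + sin (q - p)"
    by (simp add: sin_diff algebra_simps)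
  also have "\<dots> = sin (2*u) - sin (2*(u+v)) + sin (2* v)" by (simp add: hr hq algebra_simps)
  also have "\<dots> = 4 * sin u * sin v * sin (u+v)"
  proof -
    have e1: "sin (2*(u+v)) = sin (2*u) * cos (2* v) + cos (2*u) * sin (2* v)"
      by (simp add: distrib_left sin_add)
    have hu: "sin u ^2 + cos u ^2 = 1" and hv: "sin v ^2 + cos v ^2 = 1" by simp_all
    show ?thesis unfolding e1 unfolding sin_double cos_double sin_add using hu hv
      by algebra
  qed
  finally show ?thesis by (simp add: u_def v_def hrp)
qed

lemma normsq_comb:
  fixes a b :: complex and t :: real
  assumes "norm a = 1" "norm b = 1"
  shows "(norm (a + of_real t * (b - a)))^2 = 1 - t*(1-t) * (norm (b-a))^2"
proof -
  have ha: "Re a ^2 + Im a ^2 = 1" using assms(1) by (metis cmod_power2 power_one)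
  have hb: "Re b ^2 + Im b ^2 = 1" using assms(2) by (metis cmod_power2 power_one)
  show ?thesis unfolding cmod_power2 using ha hb
    by (simp add: power2_eq_square algebra_simps) algebra
qed

lemma in_seg:
  fixes a b :: complex
  assumes "0 \<le> t" "t \<le> 1"
  shows "a + of_real t * (b - a) \<in> chord_seg {a, b}"
proof -
  have "a + of_real t * (b - a) = (1 - t) *\<^sub>R a + t *\<^sub>R b"
    by (simp add: scaleR_conv_of_real algebra_simps)
  then show ?thesis unfolding chord_seg_def segment_convex_hull[symmetric] closed_segment_def
    using assms by blast
qed

lemma cross_sides:
  fixes a b c e :: complex
  defines "f \<equiv> \<lambda>w. Im ((w - a) * cnj (b - a))"
  assumes na: "norm a = 1" and nb: "norm b = 1" and nc: "norm c = 1" and ne: "norm e = 1"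
    and ab: "a \<noteq> b" and fc: "f c < 0" and fe: "f e > 0"
  shows "crossing {a, b} {c, e}"
proof -
  have fa: "f a = 0" by (simp add: f_def)
  have fb: "f b = 0" unfolding f_def by (simp add: algebra_simps)
  have neq: "{a, b} \<noteq> {c, e}"
  proof
    assume "{a, b} = {c, e}"
    then have "c \<in> {a,b}" by blast
    then show False using fa fb fc by auto
  qed
  define t where "t = f c / (f c - f e)"
  have t0: "0 < t" and t1: "t < 1" using fc fe by (auto simp: t_def field_simps)
  define z where "z = c + of_real t * (e - c)"
  have fz: "f z = 0"
  proof -
    have "f z = f c + t * (f e - f c)"
      by (simp add: f_def z_def algebra_simps)
    also have "\<dots> = 0" using fc fe by (simp add: t_def field_simps)
    finally show ?thesis .
  qed
  have ce: "c \<noteq> e" using fc fe by auto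
  have zseg: "z \<in> chord_seg {c, e}" unfolding z_def using in_seg t0 t1 by auto
  have "(norm z)^2 = 1 - t*(1-t)*(norm (e-c))^2" unfolding z_def by (rule normsq_comb[OF nc ne])
  moreover have "t*(1-t)*(norm (e-c))^2 > 0" using t0 t1 ce by simp
  ultimately have zlt: "(norm z)^2 < 1" by linarith
  then have zball: "z \<in> ball 0 1"
    by (simp add: power_less_one_iff)
  define k where "k = (z - a) * cnj (b - a)"
  have Imk: "Im k = 0" using fz by (simp add: f_def k_def)
  have bane: "b - a \<noteq> 0" using ab by simp
  define lam where "lam = Re k / (norm (b - a))^2"
  have zl: "z = a + of_real lam * (b - a)"
  proof -
    have kk: "k = of_real (Re k)" using Imk by (simp add: complex_eq_iff)
    have nn: "(b - a) * cnj (b - a) = of_real ((norm (b - a))^2)" by (metis complex_norm_square)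
    have nz: "(b - a) * cnj (b - a) \<noteq> 0" using bane by simp
    have "z - a = ((z - a) * ((b - a) * cnj (b - a))) / ((b - a) * cnj (b - a))" using nz by simp
    also have "\<dots> = k * (b - a) / ((b - a) * cnj (b - a))" by (simp add: k_def mult_ac)
    also have "\<dots> = of_real (Re k) * (b - a) / of_real ((norm (b - a))^2)"
      unfolding nn by (subst kk) simp
    also have "\<dots> = of_real lam * (b - a)" by (simp add: lam_def)
    finally show ?thesis by (simp add: algebra_simps)
  qed
  have "(norm z)^2 = 1 - lam*(1-lam)*(norm (b-a))^2" unfolding zl by (rule normsq_comb[OF na nb])
  with zlt have "lam*(1-lam)*(norm (b-a))^2 > 0" by linarith
  then have "lam*(1-lam) > 0" using bane by (simp add: zero_less_mult_iff)
  then have "0 < lam" "lam < 1" by (auto simp: zero_less_mult_iff)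
  then have zseg2: "z \<in> chord_seg {a, b}" unfolding zl using in_seg by auto
  show ?thesis unfolding crossing_def using neq zseg zseg2 zball by blast
qed

lemma Im_rot:
  fixes x :: complex
  assumes "norm x = 1"
  shows "Im ((x * cis r - x * cis p) * cnj (x * cis q - x * cis p))
       = 4 * sin ((r-q)/2) * sin ((q-p)/2) * sin ((r-p)/2)"
proof -
  have xx: "x * cnj x = 1" using assms by (metis complex_norm_square of_real_1 power_one)
  have "(x * cis r - x * cis p) * cnj (x * cis q - x * cis p) = (x * cnj x) * ((cis r - cis p) * cnj (cis q - cis p))"
    by (simp add: algebra_simps)
  then show ?thesis using xx trig_id by simp
qed

lemma cross_angles:
  fixes x :: complex
  assumes nx: "norm x = 1" and h: "p < r" "r < q" "q < s" "s < p + 2*pi"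
  shows "crossing {x * cis p, x * cis q} {x * cis r, x * cis s}"
proof -
  define f where "f \<equiv> \<lambda>w. Im ((w - x * cis p) * cnj (x * cis q - x * cis p))"
  have s1: "sin ((r-q)/2) < 0"
  proof -
    have "(r-q)/2 = - ((q-r)/2)" by (simp add: field_simps)
    then have "sin ((r-q)/2) = - sin ((q-r)/2)" by (metis sin_minus)
    then show ?thesis using sin_gt_zero[of "(q-r)/2"] h by simp
  qed
  have s2: "sin ((q-p)/2) > 0" using sin_gt_zero h by simp
  have s3: "sin ((r-p)/2) > 0" using sin_gt_zero h by simp
  have s4: "sin ((s-q)/2) > 0" using sin_gt_zero h by simp
  have s5: "sin ((s-p)/2) > 0" using sin_gt_zero h by simp
  have fc: "f (x * cis r) < 0" unfolding f_def Im_rot[OF nx]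
    using s1 s2 s3 by (simp add: mult_neg_pos mult_pos_pos)
  have fe: "f (x * cis s) > 0" unfolding f_def Im_rot[OF nx]
    using s4 s2 s5 by simp
  have ab: "x * cis p \<noteq> x * cis q"
  proof
    assume "x * cis p = x * cis q"
    then have eq: "x * cis q - x * cis p = 0" by auto
    have "f (x * cis r) = 0" unfolding f_def by (simp only: eq complex_cnj_zero mult_zero_right zero_complex.sel)
    with fc show False by simp
  qed
  show ?thesis
    by (rule cross_sides) (use nx ab fc fe in \<open>auto simp: f_def norm_mult\<close>)
qed

lemma cis_sub2pi: "cis (a - 2*pi) = cis a"
  by (simp flip: cis_divide)

lemma T_contra:
  fixes x :: complex and N :: nat
  assumes nc: "\<forall>l\<in>L. \<forall>m\<in>L. \<not> crossing l m"
    and img: "\<forall>l\<in>L. (\<lambda>z. z ^ N) ` l \<in> L"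
    and N2: "N \<ge> 2" and nx: "norm x = 1" and xN: "x ^ N = x"
    and t: "{x * cis g, x * cis phi} \<in> L" and g0: "g \<noteq> 0"
    and gsmall: "real N * \<bar>g\<bar> < B" and B1: "B \<le> phi" and B2: "phi \<le> 2*pi - B"
    and eN: "(x * cis phi) ^ N = x"
  shows False
proof -
  have "(\<lambda>z. z ^ N) ` {x * cis g, x * cis phi} = {x * cis (real N * g), x}"
  proof -
    have e1: "(x * cis g) ^ N = x * cis (real N * g)" using xN by (simp add: power_mult_distrib Complex.DeMoivre)
    show ?thesis by (simp only: image_insert image_empty e1 eN)
  qed
  then have m: "{x * cis (real N * g), x} \<in> L" using img t by metis
  have Bpos: "B > 0" using gsmall g0 N2 by (smt (verit) mult_nonneg_nonneg of_nat_0_le_iff abs_ge_zero)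
  show False
  proof (cases "g > 0")
    case True
    have "g < real N * g" using True N2 by (simp add: mult_less_cancel_right1 ) 
    moreover have "real N * g < phi" using gsmall B1 True by simp
    moreover have "phi < 0 + 2*pi" using B2 Bpos by simp
    ultimately have "crossing {x * cis 0, x * cis (real N * g)} {x * cis g, x * cis phi}"
      using True by (intro cross_angles nx) auto
    then have "crossing {x * cis (real N * g), x} {x * cis g, x * cis phi}" by (simp add: insert_commute)
    then show False using nc m t by blast
  next
    case False
    then have gn: "g < 0" using g0 by simp
    have "real N * g < g" using gn N2 by (simp add: mult_less_cancel_right1)
    moreover have "phi - 2*pi < real N * g" using gsmall B2 gn by (simp add: abs_if)
    moreover have "0 < phi - 2*pi + 2*pi" using B1 Bpos by simp
    ultimately have "crossing {x * cis (phi - 2*pi), x * cis g} {x * cis (real N * g), x * cis 0}"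
      using gn by (intro cross_angles nx) auto
    then have "crossing {x * cis g, x * cis phi} {x * cis (real N * g), x}"
      by (simp add: insert_commute cis_sub2pi)
    then show False using nc m t by blast
  qed
qed

lemma AB_contra:
  fixes x :: complex and N :: nat
  assumes nc: "\<forall>l\<in>L. \<forall>m\<in>L. \<not> crossing l m"
    and img: "\<forall>l\<in>L. (\<lambda>z. z ^ N) ` l \<in> L"
    and N2: "N \<ge> 2" and nx: "norm x = 1" and xN: "x ^ N = x"
    and B1: "B \<le> psi" and B2: "psi \<le> 2*pi - B"
    and yN: "(x * cis psi) ^ N = x"
    and l: "{x, x * cis psi} \<in> L"
    and l': "{x * cis a, x * cis (psi + b)} \<in> L"
    and a0: "a \<noteq> 0" and b0: "b \<noteq> 0"
    and as: "real N * \<bar>a\<bar> < B" and bs: "real N * \<bar>b\<bar> < B"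
  shows False
proof -
  have Npos: "real N \<ge> 2" using N2 by simp
  have aB: "\<bar>a\<bar> < B" and bB: "\<bar>b\<bar> < B"
    using as bs a0 b0 Npos by (smt (verit) mult_le_cancel_right1 abs_ge_zero)+
  have Bpos: "B > 0" using aB by simp
  have l0: "{x * cis 0, x * cis psi} \<in> L" using l by simp
  have e1: "(x * cis a) ^ N = x * cis (real N * a)" using xN by (simp add: power_mult_distrib Complex.DeMoivre)
  have e2: "(x * cis (psi + b)) ^ N = x * cis (real N * b)"
  proof -
    have "(x * cis (psi + b)) ^ N = (x * cis psi) ^ N * (cis b) ^ N"
      by (simp add: cis_mult[symmetric] power_mult_distrib mult_ac)
    then show ?thesis using yN by (simp add: Complex.DeMoivre)
  qed
  have m: "{x * cis (real N * a), x * cis (real N * b)} \<in> L"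
  proof -
    have "(\<lambda>z. z ^ N) ` {x * cis a, x * cis (psi + b)} = {x * cis (real N * a), x * cis (real N * b)}"
      by (simp only: image_insert image_empty e1 e2)
    then show ?thesis using img l' by metis
  qed
  have m0: "{x * cis (real N * a), x * cis (real N * b)} \<in> L" using m by simp
  consider "a > 0" "b > 0" | "a < 0" "b < 0" | "a > 0" "b < 0" | "a < 0" "b > 0"
    using a0 b0 by linarith
  then show False
  proof cases
    case 1
    have "crossing {x * cis 0, x * cis psi} {x * cis a, x * cis (psi + b)}"
      using 1 aB bB B1 B2 by (intro cross_angles nx) auto
    then show False using nc l0 l' by blast
  next
    case 2
    have "crossing {x * cis a, x * cis (psi + b)} {x * cis 0, x * cis psi}"
      using 2 aB bB B1 B2 by (intro cross_angles nx) auto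
    then show False using nc l0 l' by blast
  next
    case 3
    have "real N * b < 0" "0 < real N * a" using 3 Npos by (simp_all add: mult_pos_pos mult_pos_neg)
    moreover have "real N * a < psi" using as 3 B1 by simp
    moreover have "psi < real N * b + 2*pi" using bs 3 B2 by simp
    ultimately have "crossing {x * cis (real N * b), x * cis (real N * a)} {x * cis 0, x * cis psi}"
      by (intro cross_angles nx) auto
    then show False using nc l0 m by (metis insert_commute)
  next
    case 4
    have "real N * a < 0" "0 < real N * b" using 4 Npos by (simp_all add: mult_pos_pos mult_pos_neg)
    moreover have "real N * b < psi" using bs 4 B1 by simp
    moreover have "psi < real N * a + 2*pi" using as 4 B2 by simp
    ultimately have "crossing {x * cis (real N * a), x * cis (real N * b)} {x * cis 0, x * cis psi}"
      by (intro cross_angles nx) auto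
    then show False using nc l0 m by blast
  qed
qed

lemma rootangle:
  fixes w :: complex and d :: nat
  assumes d: "d > 0" and w: "w ^ d = 1" and w1: "w \<noteq> 1"
  shows "\<exists>phi. w = cis phi \<and> 2*pi/d \<le> phi \<and> phi \<le> 2*pi - 2*pi/d"
proof -
  have "w \<in> {z. z ^ d = 1}" using w by simp
  then obtain k where k: "k < d" and wk: "w = cis (2 * pi * real k / real d)"
    using Complex.bij_betw_roots_unity[OF d] unfolding bij_betw_def by auto
  have "k \<noteq> 0"
  proof
    assume "k = 0"
    then have "w = 1" using wk by simp
    with w1 show False by simp
  qed
  then have k1: "1 \<le> real k" and k2: "real k \<le> real d - 1" using k by auto
  have "2*pi/d \<le> 2 * pi * real k / real d" using k1 d by (simp add: divide_right_mono)
  moreover have "2 * pi * real k / real d \<le> 2*pi - 2*pi/d"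
  proof -
    have "2 * pi * real k / real d \<le> 2 * pi * (real d - 1) / real d"
      using k2 d by (intro divide_right_mono mult_left_mono) auto
    also have "\<dots> = 2*pi - 2*pi/d" using d by (simp add: field_simps)
    finally show ?thesis .
  qed
  ultimately show ?thesis using wk by blast
qed

lemma near_angle:
  assumes eta: "eta > 0"
  shows "\<exists>del>0. \<forall>x a. norm x = 1 \<longrightarrow> norm a = 1 \<longrightarrow> dist a x < del \<longrightarrow> (\<exists>al. a = x * cis al \<and> \<bar>al\<bar> < eta)"
proof -
  have "(1::complex) \<notin> \<real>\<^sub>\<le>\<^sub>0" by (auto simp: nonpos_Reals_def)
  then have "continuous (at 1) Arg" by (rule continuous_at_Arg)
  then obtain del where del: "del > 0" and h: "\<And>z. dist z 1 < del \<Longrightarrow> dist (Arg z) (Arg 1) < eta"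
    using eta unfolding continuous_at_eps_delta by blast
  show ?thesis
  proof (rule exI[of _ del], intro conjI del allI impI)
    fix x a :: complex
    assume nx: "norm x = 1" and na: "norm a = 1" and dax: "dist a x < del"
    have x0: "x \<noteq> 0" using nx by auto
    have "dist (a / x) 1 = norm (a - x) / norm x" using x0
      by (simp add: dist_norm norm_divide[symmetric] diff_divide_distrib)
    then have "dist (a / x) 1 < del" using dax nx by (simp add: dist_norm)
    then have "\<bar>Arg (a / x)\<bar> < eta" using h by (simp add: dist_real_def)
    moreover have "a = x * cis (Arg (a / x))"
    proof -
      have "a / x \<noteq> 0" using na x0 by auto
      then have "cis (Arg (a / x)) = sgn (a / x)" by (rule cis_Arg)
      also have "\<dots> = a / x" using na nx by (simp add: sgn_div_norm norm_divide)
      finally show "a = x * cis (Arg (a / x))" using x0 by simp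
    qed
    ultimately show "\<exists>al. a = x * cis al \<and> \<bar>al\<bar> < eta" by blast
  qed
qed

lemma sigma_pow: "(sigma d ^^ n) z = z ^ (d ^ n)"
  by (induction n) (simp_all add: sigma_def power_mult[symmetric] mult_ac)

lemma iter_img:
  assumes "\<forall>l\<in>L. sigma d ` l \<in> L" "l \<in> L"
  shows "(\<lambda>z. z ^ (d ^ n)) ` l \<in> L"
proof -
  have "(sigma d ^^ n) ` l \<in> L"
  proof (induction n)
    case 0 then show ?case using assms by simp
  next
    case (Suc n)
    have "(sigma d ^^ Suc n) ` l = sigma d ` ((sigma d ^^ n) ` l)" by (simp add: image_comp)
    then show ?case using Suc assms by simp
  qed
  moreover have "(sigma d ^^ n) = (\<lambda>z. z ^ (d ^ n))" using sigma_pow by blast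
  ultimately show ?thesis by simp
qed

lemma powN:
  fixes e x :: complex
  assumes n: "n > 0" and ed: "e ^ d = x ^ d" and xN: "x ^ (d ^ n) = x"
  shows "e ^ (d ^ n) = x"
proof -
  have dn: "d ^ n = d * d ^ (n - 1)" using n by (metis power_eq_if neq0_conv)
  have "e ^ (d ^ n) = (e ^ d) ^ (d ^ (n - 1))" unfolding dn by (rule power_mult)
  also have "\<dots> = (x ^ d) ^ (d ^ (n - 1))" using ed by simp
  also have "\<dots> = x ^ (d ^ n)" unfolding dn by (rule power_mult[symmetric])
  finally show ?thesis using xN by simp
qed

lemma cis_ne1:
  assumes "0 < t" "t < 2*pi"
  shows "cis t \<noteq> 1"
proof
  assume "cis t = 1"
  then obtain m :: int where m: "t = of_int m * (2 * pi)" by (auto simp: cis_eq_1_iff)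
  then have "0 < of_int m * (2*pi)" "of_int m * (2*pi) < 1 * (2*pi)" using assms by auto
  then have "0 < m" "m < 1" by (simp_all add: zero_less_mult_iff mult_less_cancel_right)
  then show False by simp
qed

lemma cis_ne1': 
  assumes "t \<noteq> 0" "\<bar>t\<bar> < 2*pi"
  shows "cis t \<noteq> 1"
proof (cases "t > 0")
  case True then show ?thesis using assms cis_ne1 by auto
next
  case False
  then have "cis (-t) \<noteq> 1" using assms by (intro cis_ne1) auto
  then show ?thesis by (metis cis_inverse inverse_1)
qed



lemma E_contra:
  fixes x :: complex and d n :: nat
  assumes si: "sibling_invariant d L" and d2: "d \<ge> 2" and n: "n > 0"
    and nx: "norm x = 1" and xN: "x ^ (d ^ n) = x"
    and B: "B = 2*pi/d" and B1: "B \<le> psi" and B2: "psi \<le> 2*pi - B"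
    and psid: "(cis psi) ^ d = 1"
    and l': "{x, x * cis (psi + b)} \<in> L" and b0: "b \<noteq> 0" and bs: "real (d ^ n) * \<bar>b\<bar> < B"
  shows False
proof -
  define N where "N = d ^ n"
  have lam: "lamination L" using si by (simp add: sibling_invariant_def)
  have nc: "\<forall>l\<in>L. \<forall>m\<in>L. \<not> crossing l m" using lam by (simp add: lamination_def)
  have chords: "\<forall>l\<in>L. is_chord l" using lam by (simp add: lamination_def)
  have inv1: "\<forall>l\<in>L. sigma d ` l \<in> L" using si by (simp add: sibling_invariant_def)
  have img: "\<forall>l\<in>L. (\<lambda>z. z ^ N) ` l \<in> L" using iter_img[OF inv1] N_def by blast
  have dpos: "d > 0" using d2 by simp
  have dN: "d \<le> N" unfolding N_def using d2 n by (intro self_le_power) auto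
  have N2: "N \<ge> 2" using dN d2 by simp
  have Nd: "real d \<le> real N" using dN by simp
  have Bpi: "B \<le> pi"
  proof -
    have "2*pi/real d \<le> 2*pi/2" using d2 by (intro divide_left_mono) auto
    then show ?thesis using B by simp
  qed
  have Bpos: "B > 0" using B dpos by simp
  have db: "real d * \<bar>b\<bar> < B"
  proof -
    have "real d * \<bar>b\<bar> \<le> real N * \<bar>b\<bar>" using Nd by (intro mult_right_mono) auto
    then show ?thesis using bs N_def by simp
  qed
  define c where "c = x * cis b"
  define bb where "bb = x * cis (psi + b)"
  have x0: "x \<noteq> 0" using nx by auto
  have sbb: "sigma d bb = sigma d c"
    by (simp add: sigma_def bb_def c_def cis_mult[symmetric] power_mult_distrib psid)
  have cbd: "(cis b) ^ d \<noteq> 1"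
  proof -
    have lt0: "real d * \<bar>b\<bar> < 2*pi" using db Bpi pi_gt_zero by linarith
    have lt: "\<bar>real d * b\<bar> < 2*pi" using lt0 by (simp add: abs_mult)
    have "cis (real d * b) \<noteq> 1" using b0 dpos lt by (intro cis_ne1') auto
    then show ?thesis by (simp add: Complex.DeMoivre)
  qed
  have sxc: "sigma d x \<noteq> sigma d c"
    using cbd x0 by (simp add: sigma_def c_def power_mult_distrib)
  have ncrit: "\<not> critical d {x, bb}"
  proof
    assume "critical d {x, bb}"
    then obtain a1 b1 where e: "{x, bb} = {a1, b1}" "a1 \<noteq> b1" "sigma d a1 = sigma d b1"
      unfolding critical_def by blast
    then have "sigma d x = sigma d bb" by (auto simp: doubleton_eq_iff)
    then show False using sbb sxc by simp
  qed
  have l'b: "{x, bb} \<in> L" using l' bb_def by simp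
  obtain s :: "nat \<Rightarrow> complex set" where s0: "s 0 = {x, bb}"
    and sL: "\<And>i. i < d \<Longrightarrow> s i \<in> L \<and> sigma d ` (s i) = sigma d ` {x, bb}"
    and sdisj: "\<And>i j. i < d \<Longrightarrow> j < d \<Longrightarrow> i \<noteq> j \<Longrightarrow> chord_seg (s i) \<inter> chord_seg (s j) = {}"
  proof -
    have "\<forall>l\<in>L. \<not> critical d l \<longrightarrow>
        (\<exists>s :: nat \<Rightarrow> complex set. s 0 = l \<and>
            (\<forall>i<d. s i \<in> L \<and> sigma d ` (s i) = sigma d ` l) \<and>
            (\<forall>i<d. \<forall>j<d. i \<noteq> j \<longrightarrow> chord_seg (s i) \<inter> chord_seg (s j) = {}))"
      using si unfolding sibling_invariant_def by blast
    then have "\<exists>s :: nat \<Rightarrow> complex set. s 0 = {x, bb} \<and>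
            (\<forall>i<d. s i \<in> L \<and> sigma d ` (s i) = sigma d ` {x, bb}) \<and>
            (\<forall>i<d. \<forall>j<d. i \<noteq> j \<longrightarrow> chord_seg (s i) \<inter> chord_seg (s j) = {})"
      using l'b ncrit by blast
    then obtain s :: "nat \<Rightarrow> complex set" where A: "s 0 = {x, bb}"
      and Bb: "\<forall>i<d. s i \<in> L \<and> sigma d ` (s i) = sigma d ` {x, bb}"
      and C: "\<forall>i<d. \<forall>j<d. i \<noteq> j \<longrightarrow> chord_seg (s i) \<inter> chord_seg (s j) = {}" by blast
    show ?thesis by (rule that[of s, OF A]) (use Bb C in auto)
  qed
  have ex: "\<And>i. i < d \<Longrightarrow> \<exists>p. p \<in> s i \<and> sigma d p = sigma d c"
  proof -
    fix i assume "i < d"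
    then have "sigma d c \<in> sigma d ` (s i)" using sL sbb by auto
    then show "\<exists>p. p \<in> s i \<and> sigma d p = sigma d c" by auto
  qed
  define p where "p i = (SOME q. q \<in> s i \<and> sigma d q = sigma d c)" for i
  have p: "\<And>i. i < d \<Longrightarrow> p i \<in> s i \<and> sigma d (p i) = sigma d c"
    unfolding p_def using ex by (rule someI_ex) 
  have inj: "inj_on p {..<d}"
  proof (rule inj_onI)
    fix i j assume i: "i \<in> {..<d}" and j: "j \<in> {..<d}" and pij: "p i = p j"
    show "i = j"
    proof (rule ccontr)
      assume "i \<noteq> j"
      then have "chord_seg (s i) \<inter> chord_seg (s j) = {}" using sdisj i j by auto
      moreover have "p i \<in> chord_seg (s i)" "p j \<in> chord_seg (s j)"
      proof -
        have "p i \<in> s i" "p j \<in> s j" using p i j by auto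
        then show "p i \<in> chord_seg (s i)" "p j \<in> chord_seg (s j)"
          using hull_subset[of "s i" convex] hull_subset[of "s j" convex] unfolding chord_seg_def by blast+
      qed
      ultimately show False using pij by auto
    qed
  qed
  define R where "R = {z::complex. z ^ d = sigma d c}"
  have sc0: "sigma d c \<noteq> 0" using x0 by (simp add: sigma_def c_def)
  have cardR: "card R = d" unfolding R_def by (rule card_nth_roots[OF sc0 dpos])
  have finR: "finite R" unfolding R_def using dpos by blast
  have sub: "p ` {..<d} \<subseteq> R" using p by (auto simp: R_def sigma_def)
  have "card (p ` {..<d}) = d" using inj by (simp add: card_image)
  then have eqR: "p ` {..<d} = R" using card_subset_eq[OF finR sub] cardR by simp
  have "c \<in> R" by (simp add: R_def sigma_def)
  then obtain i where i: "i < d" and ci: "c = p i" using eqR by auto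
  have cs: "c \<in> s i" using p[OF i] ci by simp
  have cx: "c \<noteq> x" using cbd x0 by (auto simp: c_def)
  have cpsi: "cis psi \<noteq> 1" using Bpos B1 B2 by (intro cis_ne1) auto
  have cbb: "c \<noteq> bb"
  proof
    assume "c = bb"
    then have "x * cis b = x * cis b * cis psi" by (simp add: c_def bb_def cis_mult[symmetric] mult_ac)
    then have "cis psi = 1" using x0 by simp
    with cpsi show False by simp
  qed
  have i0: "i \<noteq> 0"
  proof
    assume "i = 0"
    then have "c \<in> {x, bb}" using cs s0 by simp
    with cx cbb show False by simp
  qed
  have xnot: "x \<notin> s i"
  proof
    assume "x \<in> s i"
    then have "x \<in> chord_seg (s i)" using hull_subset[of "s i" convex] unfolding chord_seg_def by blast
    moreover have "x \<in> chord_seg (s 0)" using s0 hull_subset[of "s 0" convex] unfolding chord_seg_def by blast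
    ultimately show False using sdisj[OF i dpos i0] by blast
  qed
  have siL: "s i \<in> L" using sL i by simp
  obtain u v where uv: "u \<in> circle" "v \<in> circle" "s i = {u, v}" using chords siL unfolding is_chord_def by blast
  obtain e where se: "s i = {c, e}" and ecirc: "e \<in> circle"
    using uv cs by auto
  have "sigma d ` {c, e} = sigma d ` {x, bb}" using sL[OF i] se by metis
  then have "sigma d x \<in> {sigma d c, sigma d e}" by auto
  then have sex: "sigma d e = sigma d x" using sxc by auto
  have ex': "e \<noteq> x" using xnot se by auto
  have ed: "(e / x) ^ d = 1" using sex x0 by (simp add: sigma_def power_divide)
  have e1: "e / x \<noteq> 1" using ex' x0 by simp
  obtain phi where ph: "e / x = cis phi" "2*pi/d \<le> phi" "phi \<le> 2*pi - 2*pi/d"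
    using rootangle[OF dpos ed e1] by blast
  have eform: "e = x * cis phi" using ph(1) x0 by (simp add: field_simps)
  have eN: "(x * cis phi) ^ N = x" unfolding N_def eform[symmetric]
    using powN[OF n _ xN] sex by (simp add: sigma_def)
  show False
  proof (rule T_contra[OF nc img N2 nx])
    show "x ^ N = x" using xN N_def by simp
    show "{x * cis b, x * cis phi} \<in> L" using siL se eform c_def by simp
    show "b \<noteq> 0" by fact
    show "real N * \<bar>b\<bar> < B" using bs N_def by simp
    show "B \<le> phi" "phi \<le> 2*pi - B" using ph B by auto
    show "(x * cis phi) ^ N = x" by fact
  qed
qed

lemma normsq_Re:
  fixes a x :: complex
  assumes "norm a = 1" "norm x = 1"
  shows "(norm (a - x))^2 = 2 - 2 * Re (a * cnj x)"
proof -
  have ha: "Re a ^2 + Im a ^2 = 1" using assms(1) by (metis cmod_power2 power_one)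
  have hx: "Re x ^2 + Im x ^2 = 1" using assms(2) by (metis cmod_power2 power_one)
  show ?thesis unfolding cmod_power2 using ha hx by (simp add: power2_eq_square algebra_simps)
qed

lemma half_aux: "(y::real) < e \<Longrightarrow> 1/2 * w \<le> y \<Longrightarrow> w < 2 * e"
  by linarith

lemma near_end:
  fixes a b x z :: complex
  assumes na: "norm a = 1" and nb: "norm b = 1" and nx: "norm x = 1"
    and z: "z \<in> chord_seg {a, b}" and dz: "dist x z < eps"
  shows "(norm (a - x))^2 < 4 * eps \<or> (norm (b - x))^2 < 4 * eps"
proof -
  obtain t where t: "0 \<le> t" "t \<le> 1" and zt: "z = (1 - t) *\<^sub>R a + t *\<^sub>R b"
    using z unfolding chord_seg_def segment_convex_hull[symmetric] closed_segment_def by blast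
  have xx: "x * cnj x = 1" using nx by (metis complex_norm_square of_real_1 power_one)
  have "Re ((x - z) * cnj x) \<le> norm ((x - z) * cnj x)" by (rule complex_Re_le_cmod)
  also have "\<dots> = norm (x - z)" using nx by (simp add: norm_mult)
  also have "\<dots> < eps" using dz by (simp add: dist_norm)
  finally have "Re ((x - z) * cnj x) < eps" .
  moreover have "Re ((x - z) * cnj x) = 1 - Re (z * cnj x)" using xx by (simp add: algebra_simps)
  moreover have "Re (z * cnj x) = (1 - t) * Re (a * cnj x) + t * Re (b * cnj x)"
    unfolding zt by (simp add: scaleR_conv_of_real algebra_simps)
  ultimately have key: "(1 - t) * (1 - Re (a * cnj x)) + t * (1 - Re (b * cnj x)) < eps"
    by (simp add: algebra_simps)
  have ra: "Re (a * cnj x) \<le> 1"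
    using complex_Re_le_cmod[of "a * cnj x"] na nx by (simp add: norm_mult)
  have rb: "Re (b * cnj x) \<le> 1"
    using complex_Re_le_cmod[of "b * cnj x"] nb nx by (simp add: norm_mult)
  show ?thesis
  proof (cases "t \<le> 1/2")
    case True
    have "t * (1 - Re (b * cnj x)) \<ge> 0" using t rb by simp
    then have "(1 - t) * (1 - Re (a * cnj x)) < eps" using key by linarith
    moreover have "(1/2) * (1 - Re (a * cnj x)) \<le> (1 - t) * (1 - Re (a * cnj x))"
      using True ra by (intro mult_right_mono) auto
    ultimately have "1 - Re (a * cnj x) < 2 * eps" by (rule half_aux)
    then show ?thesis using normsq_Re[OF na nx] by simp
  next
    case False
    have "(1 - t) * (1 - Re (a * cnj x)) \<ge> 0" using t ra by simp
    then have "t * (1 - Re (b * cnj x)) < eps" using key by linarith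
    moreover have "(1/2) * (1 - Re (b * cnj x)) \<le> t * (1 - Re (b * cnj x))"
      using False rb by (intro mult_right_mono) auto
    ultimately have "1 - Re (b * cnj x) < 2 * eps" by (rule half_aux)
    then show ?thesis using normsq_Re[OF nb nx] by simp
  qed
qed

lemma seg_cball:
  assumes "l \<subseteq> circle"
  shows "chord_seg l \<subseteq> cball 0 1"
  unfolding chord_seg_def using assms by (intro hull_minimal) auto

lemma infdist_le_hd:
  assumes A: "A \<subseteq> cball 0 1" "A \<noteq> {}" and B: "B \<subseteq> cball 0 1" and b: "b \<in> B"
  shows "infdist b A \<le> hausdorff_dist A B"
proof -
  obtain a0 where a0: "a0 \<in> A" using A by blast
  have "bdd_above ((\<lambda>b. infdist b A) ` B)"
  proof (rule bdd_aboveI2)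
    fix b' assume "b' \<in> B"
    have "infdist b' A \<le> dist b' a0" using a0 by (rule infdist_le)
    also have "\<dots> \<le> norm b' + norm a0" by (simp add: dist_norm norm_triangle_ineq4)
    also have "\<dots> \<le> 2" using \<open>b' \<in> B\<close> B a0 A by (smt (verit) mem_cball_0 subsetD)
    finally show "infdist b' A \<le> 2" .
  qed
  then have "infdist b A \<le> (SUP b\<in>B. infdist b A)" using b by (rule cSUP_upper2) simp
  then show ?thesis unfolding hausdorff_dist_def by simp
qed


theorem lemmal:
  fixes d :: nat and L :: "complex set set" and x y :: complex
  assumes "d \<ge> 2"
    and "sibling_invariant d L"
    and "{x, y} \<in> L"
    and "critical d {x, y}"
    and "periodic_pt d x"
  shows "isolated_leaf L {x, y}"
proof -
  note d2 = assms(1) and si = assms(2) and lL = assms(3)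
  have lam: "lamination L" using si by (simp add: sibling_invariant_def)
  have nc: "\<forall>l\<in>L. \<forall>m\<in>L. \<not> crossing l m" using lam by (simp add: lamination_def)
  have chords: "\<forall>l\<in>L. is_chord l" using lam by (simp add: lamination_def)
  have inv1: "\<forall>l\<in>L. sigma d ` l \<in> L" using si by (simp add: sibling_invariant_def)
  have dpos: "d > 0" using d2 by simp
  obtain n where n: "n > 0" and xn: "(sigma d ^^ n) x = x" using assms(5) unfolding periodic_pt_def by blast
  define N where "N = d ^ n"
  have xN: "x ^ N = x" using xn by (simp add: sigma_pow N_def)
  have img: "\<forall>l\<in>L. (\<lambda>z. z ^ N) ` l \<in> L" using iter_img[OF inv1] N_def by blast
  have dN: "d \<le> N" unfolding N_def using d2 n by (intro self_le_power) auto
  have N2: "N \<ge> 2" using dN d2 by simp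
  have Npos: "real N > 0" using N2 by simp
  obtain a0 b0 where crit: "{x, y} = {a0, b0}" "a0 \<noteq> b0" "sigma d a0 = sigma d b0"
    using assms(4) unfolding critical_def by blast
  have xy: "x \<noteq> y" and xyd: "x ^ d = y ^ d" using crit by (auto simp: doubleton_eq_iff sigma_def)
  obtain u v where "u \<in> circle" "v \<in> circle" "{x, y} = {u, v}" using chords lL unfolding is_chord_def by blast
  then have nx: "norm x = 1" and ny: "norm y = 1" by (auto simp: doubleton_eq_iff)
  have x0: "x \<noteq> 0" using nx by auto
  have yx: "(y / x) ^ d = 1" using x0 by (simp add: power_divide xyd[symmetric])
  have yx1: "y / x \<noteq> 1" using xy x0 by simp
  define B where "B = 2*pi/d"
  have Bpos: "B > 0" using dpos by (simp add: B_def)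
  obtain psi where psi: "y / x = cis psi" "B \<le> psi" "psi \<le> 2*pi - B"
    using rootangle[OF dpos yx yx1] B_def by blast
  have yform: "y = x * cis psi" using psi(1) x0 by (simp add: field_simps)
  have psid: "(cis psi) ^ d = 1" using yx psi(1) by simp
  have yN: "y ^ N = x" unfolding N_def using powN[OF n _ xN[unfolded N_def]] xyd by simp
  show ?thesis unfolding isolated_leaf_def
  proof
    assume "\<exists>s. (\<forall>k. s k \<in> L - {{x, y}}) \<and> (\<lambda>k. hausdorff_dist (chord_seg (s k)) (chord_seg {x, y})) \<longlonglongrightarrow> 0"
    then obtain s where sL: "\<And>k. s k \<in> L - {{x, y}}"
      and lim: "(\<lambda>k. hausdorff_dist (chord_seg (s k)) (chord_seg {x, y})) \<longlonglongrightarrow> 0" by blast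
    define eta where "eta = B / real N"
    have eta: "eta > 0" using Bpos Npos by (simp add: eta_def)
    obtain del where del: "del > 0"
      and hdel: "\<And>x a. norm x = 1 \<Longrightarrow> norm a = 1 \<Longrightarrow> dist a x < del \<Longrightarrow> \<exists>al. a = x * cis al \<and> \<bar>al\<bar> < eta"
      using near_angle[OF eta] by blast
    define del' where "del' = min del (norm (x - y) / 2)"
    have del': "del' > 0" using del xy by (simp add: del'_def)
    define eps where "eps = (del' / 2)^2"
    have eps: "eps > 0" using del' by (simp add: eps_def)
    have ev: "eventually (\<lambda>k. hausdorff_dist (chord_seg (s k)) (chord_seg {x, y}) < eps) sequentially"
      using order_tendstoD(2)[OF lim eps] .
    have "\<exists>k. hausdorff_dist (chord_seg (s k)) (chord_seg {x, y}) < eps"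
      using ev unfolding eventually_sequentially by blast
    then obtain k where hk: "hausdorff_dist (chord_seg (s k)) (chord_seg {x, y}) < eps" by blast
    have skL: "s k \<in> L" and skne: "s k \<noteq> {x, y}" using sL[of k] by auto
    obtain a b where ab: "a \<in> circle" "b \<in> circle" "s k = {a, b}" using chords skL unfolding is_chord_def by blast
    have segA: "chord_seg (s k) \<subseteq> cball 0 1" using ab by (intro seg_cball) auto
    have segB: "chord_seg {x, y} \<subseteq> cball 0 1" using nx ny by (intro seg_cball) auto
    have Ane: "chord_seg (s k) \<noteq> {}" using ab hull_subset[of "s k" convex] unfolding chord_seg_def by blast
    have Acl: "closed (chord_seg (s k))" unfolding chord_seg_def ab
      by (intro compact_imp_closed compact_convex_hull) simp
    have close_pt: "\<And>w. w \<in> {x, y} \<Longrightarrow> (norm (a - w))^2 < 4 * eps \<or> (norm (b - w))^2 < 4 * eps"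
    proof -
      fix w assume w: "w \<in> {x, y}"
      have nw: "norm w = 1" using w nx ny by auto
      have wB: "w \<in> chord_seg {x, y}" using w hull_subset[of "{x,y}" convex] unfolding chord_seg_def by blast
      have "infdist w (chord_seg (s k)) < eps"
        using infdist_le_hd[OF segA Ane segB wB] hk by simp
      moreover obtain z where z: "z \<in> chord_seg (s k)" "infdist w (chord_seg (s k)) = dist w z"
        using infdist_attains_inf[OF Acl Ane] by blast
      ultimately have "dist w z < eps" by simp
      then show "(norm (a - w))^2 < 4 * eps \<or> (norm (b - w))^2 < 4 * eps"
        using near_end[of a b w z eps] ab nw z by auto
    qed
    have sq: "\<And>q::complex. (norm q)^2 < 4 * eps \<Longrightarrow> norm q < del'"
    proof -
      fix q :: complex assume "(norm q)^2 < 4 * eps"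
      then have "(norm q)^2 < del'^2" by (simp add: eps_def power_divide)
      then show "norm q < del'" using del' by (simp add: power_less_imp_less_base)
    qed
    have "\<exists>a' b'. s k = {a', b'} \<and> norm (a' - x) < del' \<and> norm (b' - y) < del'"
    proof -
      have cx: "norm (a - x) < del' \<or> norm (b - x) < del'" using close_pt[of x] sq by auto
      have cy: "norm (a - y) < del' \<or> norm (b - y) < del'" using close_pt[of y] sq by auto
      have notboth: "\<And>w. norm (w - x) < del' \<Longrightarrow> norm (w - y) < del' \<Longrightarrow> False"
      proof -
        fix w :: complex assume "norm (w - x) < del'" "norm (w - y) < del'"
        then have "norm (x - y) < 2 * del'"
          using norm_triangle_ineq4[of "w - y" "w - x"] by (simp add: norm_minus_commute)
        then show False unfolding del'_def by linarith
      qed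
      show ?thesis using cx cy notboth ab(3) by (metis insert_commute)
    qed
    then obtain a' b' where ab': "s k = {a', b'}" "norm (a' - x) < del'" "norm (b' - y) < del'" by blast
    have na': "norm a' = 1" and nb': "norm b' = 1" using ab ab' by (auto simp: doubleton_eq_iff)
    have "dist a' x < del" using ab'(2) del'_def by (simp add: dist_norm)
    then obtain al where al: "a' = x * cis al" "\<bar>al\<bar> < eta"
      using hdel[OF nx na'] by blast
    have "dist b' y < del" using ab'(3) del'_def by (simp add: dist_norm)
    then obtain be where be: "b' = y * cis be" "\<bar>be\<bar> < eta"
      using hdel[OF ny nb'] by blast
    have b'form: "b' = x * cis (psi + be)" using be yform by (simp add: cis_mult[symmetric] mult_ac)
    have als: "real N * \<bar>al\<bar> < B" using al Npos by (simp add: eta_def field_simps)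
    have bes: "real N * \<bar>be\<bar> < B" using be Npos by (simp add: eta_def field_simps)
    have s'L: "{x * cis al, x * cis (psi + be)} \<in> L" using skL ab' al b'form by simp
    show False
    proof (cases "al = 0")
      case True
      show False
      proof (cases "be = 0")
        case True
        then have "s k = {x, y}" using ab' al b'form yform \<open>al = 0\<close> by simp
        with skne show False by simp
      next
        case False
        show False
        proof (rule E_contra[OF si d2 n nx xN[unfolded N_def] B_def psi(2) psi(3) psid _ False])
          show "{x, x * cis (psi + be)} \<in> L" using s'L \<open>al = 0\<close> by simp
          show "real (d ^ n) * \<bar>be\<bar> < B" using bes N_def by simp
        qed
      qed
    next
      case False
      note al0 = False
      show False
      proof (cases "be = 0")
        case True
        show False
        proof (rule T_contra[OF nc img N2 nx xN _ al0 als psi(2) psi(3)])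
          show "{x * cis al, x * cis psi} \<in> L" using s'L True by simp
          show "(x * cis psi) ^ N = x" using yN yform by simp
        qed
      next
        case False
        show False
          by (rule AB_contra[OF nc img N2 nx xN psi(2) psi(3) _ _ s'L al0 False als bes])
            (use yN yform lL in simp_all)
      qed
    qed
  qed
qed
end
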